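(* Let $X,Y\in\mathbf{R}$ with $Y\ge1$, and let $f\colon(X,X+Y]\to\mathbf{R}$ be a real function with continuous derivatives up to order $2$ such that $0<\lambda\le f''(x)\le\Lambda$ for $X<x\le X+Y$. Then \[ \Bigl|\frac{1}{Y}\sum_{X<n\le X+Y}e(f(n))\Bigr|\le A\Bigl\{\Bigl(\frac{\Lambda^2}{\lambda}\Bigr)^{1/2}+2(\lambda Y^2)^{-1/2}\Bigr\}, \] where $A=\frac{2}{\sqrt\pi}\bigl(1+\sqrt{1+3\pi/8}\bigr)=2.79368\ldots$.
   Context: $e(x)=e^{2\pi i x}$; the sum runs over integers $n$. *)

theory Defs
  imports "HOL-Analysis.Analysis"
begin

definition e :: "real \<Rightarrow> complex" where
  "e x = exp (2 * pi * \<i> * complex_of_real x)"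

end

theory Submission
  imports Defs
begin


lemma e_cis: "e x = cis (2 * pi * x)"
  unfolding e_def cis_conv_exp by (simp add: mult_ac)

lemma norm_e [simp]: "norm (e x) = 1"
  by (simp add: e_cis)

lemma e_add: "e (x + y) = e x * e y"
  unfolding e_def by (simp add: distrib_left distrib_right exp_add)

lemma e_int [simp]: "e (of_int k) = 1"
proof -
  have "complex_of_real (real_of_int k) \<in> \<int>" by (metis Ints_of_int of_real_of_int_eq)
  thus ?thesis by (simp add: e_cis cis_multiple_2pi)
qed

lemma e_Complex: "e x = Complex (cos (2*pi*x)) (sin (2*pi*x))"
  by (simp add: e_cis cis.code)

lemma y_cos_le_sin:
  fixes y :: real assumes "0 \<le> y" "y \<le> pi/2"
  shows "y * cos y \<le> sin y"
proof (cases "y = 0")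
  case True then show ?thesis by simp
next
  case False
  hence "0 < y" using assms by simp
  have "(\<lambda>t. sin t - t * cos t) 0 \<le> (\<lambda>t. sin t - t * cos t) y"
  proof (rule DERIV_nonneg_imp_nondecreasing[OF assms(1)])
    fix x assume x: "0 \<le> x" "x \<le> y"
    have "DERIV (\<lambda>t. sin t - t * cos t) x :> (cos x - (1 * cos x + x * (- sin x)))"
      by (auto intro!: derivative_eq_intros)
    moreover have "0 \<le> x * sin x" using x assms by (intro mult_nonneg_nonneg sin_ge_zero) auto
    ultimately show "\<exists>d. DERIV (\<lambda>t. sin t - t * cos t) x :> d \<and> 0 \<le> d"
      by (intro exI[of _ "cos x - (1 * cos x + x * (- sin x))"]) auto
  qed
  thus ?thesis by simp
qed

lemma cot_half_bound:
  fixes x :: real assumes "0 < x" "x < pi"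
  shows "1 / sin x + cos x / sin x \<le> 2 / x"
proof -
  define y where "y = x/2"
  have y: "0 < y" "y < pi/2" using assms by (auto simp: y_def)
  have sy: "sin y > 0" using y by (intro sin_gt_zero) auto
  have cy: "cos y > 0" using y by (intro cos_gt_zero) auto
  have x: "x = 2*y" by (simp add: y_def)
  have sx: "sin x = 2 * sin y * cos y" by (simp add: x sin_double)
  have cx: "1 + cos x = 2 * cos y * cos y" unfolding x cos_double power2_eq_square using sin_cos_squared_add3[of y] by linarith
  have "1 / sin x + cos x / sin x = (1 + cos x) / sin x" by (simp add: add_divide_distrib)
  also have "\<dots> = cos y / sin y" using sy cy by (simp add: cx sx)
  also have "\<dots> \<le> 2 / x"
    using y_cos_le_sin[of y] y sy by (simp add: x divide_simps mult_ac)
  finally show ?thesis .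
qed



definition cotp :: "real \<Rightarrow> real" where "cotp t = cos (pi*t) / sin (pi*t)"

lemma c_identity:
  assumes "sin (pi*t) \<noteq> 0"
  shows "Complex (-1/2) (- cotp t / 2) * (e t - 1) = 1"
proof -
  have s: "sin (2*pi*t) = 2 * sin (pi*t) * cos (pi*t)" using sin_double[of "pi*t"] by (simp add: mult_ac)
  have c: "cos (2*pi*t) = 1 - 2 * sin (pi*t) * sin (pi*t)"
  proof -
    have h: "2*pi*t = 2*(pi*t)" by simp
    show ?thesis unfolding h cos_double power2_eq_square using sin_cos_squared_add3[of "pi*t"] by linarith
  qed
  have et: "e t - 1 = Complex (- 2 * sin (pi*t) * sin (pi*t)) (2 * sin (pi*t) * cos (pi*t))"
    by (simp add: e_Complex s c complex_eq_iff)
  have sc: "sin (pi*t) * sin (pi*t) + cos (pi*t) * cos (pi*t) = 1"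
    using sin_cos_squared_add3[of "pi*t"] by linarith
  show ?thesis unfolding et cotp_def using assms sc
    by (simp add: complex_eq_iff field_simps)
qed

lemma cotp_mono:
  assumes "0 < a" "a \<le> b" "b < 1"
  shows "cotp b \<le> cotp a"
proof -
  have sa: "sin (pi*a) > 0" using assms by (intro sin_gt_zero) auto
  have sb: "sin (pi*b) > 0" using assms by (intro sin_gt_zero) auto
  have "pi*(b-a) \<le> pi*1" using assms by (intro mult_left_mono) auto
  hence "sin (pi*b - pi*a) \<ge> 0" using assms by (intro sin_ge_zero) (auto simp: right_diff_distrib)
  hence "sin (pi*b) * cos (pi*a) - cos (pi*b) * sin (pi*a) \<ge> 0" by (simp add: sin_diff)
  thus ?thesis using sa sb unfolding cotp_def by (simp add: divide_simps mult_ac)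
qed

lemma cotp_reflect: "cotp (1 - t) = - cotp t"
  unfolding cotp_def by (simp add: right_diff_distrib sin_diff cos_diff)

lemma cotp_abs:
  assumes "0 < d" "d \<le> t" "t \<le> 1 - d"
  shows "\<bar>cotp t\<bar> \<le> cotp d"
  using cotp_mono[of d t] cotp_mono[of t "1-d"] cotp_reflect[of d] assms by auto

lemma norm_c_bound:
  assumes "0 < d" "d < 1/2" "d \<le> t" "t \<le> 1 - d"
  shows "norm (Complex (-1/2) (- cotp t / 2)) \<le> 1 / (2 * sin (pi*d))"
proof -
  have sd: "sin (pi*d) > 0" using assms by (intro sin_gt_zero) auto
  have h1: "pi*d \<le> pi*(1/2)" using assms by (intro mult_left_mono) auto
  have h2: "0 \<le> pi*d" using assms by simp
  have cd: "cotp d \<ge> 0" unfolding cotp_def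
    by (intro divide_nonneg_pos sd cos_ge_zero) (use h1 h2 in linarith)+
  have "norm (Complex (-1/2) (- cotp t / 2)) = sqrt (1/4 + (cotp t)^2/4)"
    by (simp add: complex_norm power2_eq_square)
  also have "\<dots> \<le> sqrt (1/4 + (cotp d)^2/4)"
    using cotp_abs[of d t] assms cd by (intro real_sqrt_le_mono) (simp add: abs_le_square_iff[symmetric])
  also have "1/4 + (cotp d)^2/4 = (1 / (2 * sin (pi*d)))^2"
    using sd sin_cos_squared_add3[of "pi*d"] unfolding cotp_def by (simp add: field_simps power2_eq_square)
  also have "sqrt \<dots> = 1 / (2 * sin (pi*d))" using sd by simp
  finally show ?thesis .
qed



lemma KL:
  fixes \<phi> :: "nat \<Rightarrow> real" and k :: int and d :: real and p q :: nat
  assumes d: "0 < d" "d < 1/2"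
    and pq: "p < q"
    and rng: "\<And>j. p \<le> j \<Longrightarrow> j < q \<Longrightarrow> k + d \<le> \<phi> (Suc j) - \<phi> j \<and> \<phi> (Suc j) - \<phi> j \<le> k + 1 - d"
    and mono: "\<And>j. p \<le> j \<Longrightarrow> Suc j < q \<Longrightarrow> \<phi> (Suc j) - \<phi> j \<le> \<phi> (Suc (Suc j)) - \<phi> (Suc j)"
  shows "norm (\<Sum>j\<in>{p..<q}. e (\<phi> j)) \<le> 2 / (pi * d)"
proof -
  define \<theta> where "\<theta> j = \<phi> (Suc j) - \<phi> j - k" for j
  define c where "c j = Complex (-1/2) (- cotp (\<theta> j) / 2)" for j
  define E where "E j = e (\<phi> j)" for j
  define B where "B = 1 / (2 * sin (pi*d))"
  have th: "d \<le> \<theta> j \<and> \<theta> j \<le> 1 - d" if "p \<le> j" "j < q" for j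
    using rng[OF that] by (simp add: \<theta>_def)
  have thmo: "\<theta> j \<le> \<theta> (Suc j)" if "p \<le> j" "Suc j < q" for j
    using mono[OF that] by (simp add: \<theta>_def)
  have Eid: "E j = c j * (E (Suc j) - E j)" if "p \<le> j" "j < q" for j
  proof -
    have "sin (pi * \<theta> j) > 0" using th[OF that] d by (intro sin_gt_zero) auto
    hence ci: "c j * (e (\<theta> j) - 1) = 1" unfolding c_def by (intro c_identity) simp
    have "\<phi> (Suc j) = \<phi> j + \<theta> j + of_int k" by (simp add: \<theta>_def)
    hence "E (Suc j) = E j * e (\<theta> j)" by (simp add: E_def e_add)
    hence "c j * (E (Suc j) - E j) = E j * (c j * (e (\<theta> j) - 1))" by (simp add: algebra_simps)
    thus ?thesis using ci by simp
  qed
  have nc: "norm (c j) \<le> B" if "p \<le> j" "j < q" for j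
    unfolding c_def B_def using th[OF that] d by (intro norm_c_bound) auto
  have ncd: "norm (c j - c (Suc j)) = (cotp (\<theta> j) - cotp (\<theta> (Suc j))) / 2"
    if "p \<le> j" "Suc j < q" for j
  proof -
    have "cotp (\<theta> (Suc j)) \<le> cotp (\<theta> j)"
      using th[of j] th[of "Suc j"] that thmo[OF that] d by (intro cotp_mono) auto
    moreover have "c j - c (Suc j) = Complex 0 ((cotp (\<theta> (Suc j)) - cotp (\<theta> j)) / 2)"
      by (simp add: c_def complex_eq_iff)
    ultimately show ?thesis by (simp add: complex_norm)
  qed
  have ind: "norm ((\<Sum>j\<in>{p..<p+1+n}. E j) - c (p+n) * E (p+1+n)) \<le> norm (c p) + (cotp (\<theta> p) - cotp (\<theta> (p+n))) / 2"
    if "p + 1 + n \<le> q" for n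
    using that
  proof (induction n)
    case 0
    have "(\<Sum>j\<in>{p..<p+1+0}. E j) - c (p+0) * E (p+1+0) = - (c p * E p)"
      using Eid[of p] pq by (simp add: algebra_simps)
    thus ?case by (simp add: norm_mult E_def)
  next
    case (Suc n)
    have e1: "E (p+1+n) = c (p+1+n) * (E (p+1+Suc n) - E (p+1+n))"
      using Eid[of "p+1+n"] Suc.prems by simp
    have "(\<Sum>j\<in>{p..<p+1+Suc n}. E j) - c (p+Suc n) * E (p+1+Suc n)
        = ((\<Sum>j\<in>{p..<p+1+n}. E j) - c (p+n) * E (p+1+n)) + (c (p+n) - c (p + Suc n)) * E (p+1+n)"
      using e1 by (simp add: algebra_simps)
    also have "norm \<dots> \<le> norm ((\<Sum>j\<in>{p..<p+1+n}. E j) - c (p+n) * E (p+1+n)) + norm (c (p+n) - c (p + Suc n))"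
      by (rule order_trans[OF norm_triangle_ineq]) (simp add: norm_mult E_def)
    also have "\<dots> \<le> norm (c p) + (cotp (\<theta> p) - cotp (\<theta> (p+n))) / 2 + (cotp (\<theta> (p+n)) - cotp (\<theta> (p+Suc n))) / 2"
      using Suc.IH Suc.prems ncd[of "p+n"] by (simp; linarith)
    finally show ?case by (simp add: field_simps)
  qed
  obtain n where n: "q = p + 1 + n" using pq by (metis add.commute less_imp_Suc_add plus_1_eq_Suc add.assoc)
  have sd: "sin (pi*d) > 0" using d by (intro sin_gt_zero) auto
  have cd: "\<bar>cotp t\<bar> \<le> cotp d" if "d \<le> t" "t \<le> 1 - d" for t using cotp_abs[of d t] that d by simp
  have "(\<Sum>j\<in>{p..<q}. E j) = ((\<Sum>j\<in>{p..<p+1+n}. E j) - c (p+n) * E (p+1+n)) + c (p+n) * E (p+1+n)"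
    by (simp add: n)
  hence "norm (\<Sum>j\<in>{p..<q}. E j) \<le> norm ((\<Sum>j\<in>{p..<p+1+n}. E j) - c (p+n) * E (p+1+n)) + norm (c (p+n))"
    by (metis norm_triangle_ineq norm_mult E_def norm_e mult.right_neutral)
  also have "\<dots> \<le> B + (cotp (\<theta> p) - cotp (\<theta> (p+n))) / 2 + B"
    using ind[of n] nc[of p] nc[of "p+n"] n pq by fastforce
  also have "\<dots> \<le> B + cotp d + B"
    using cd[of "\<theta> p"] cd[of "\<theta> (p+n)"] th[of p] th[of "p+n"] n pq by (auto simp: abs_le_iff)
  also have "\<dots> = 1 / sin (pi*d) + cos (pi*d) / sin (pi*d)"
    by (simp add: B_def cotp_def)
  also have "\<dots> \<le> 2 / (pi*d)"
    using d by (intro cot_half_bound) auto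
  finally show ?thesis by (simp add: E_def)
qed



lemma discrete:
  fixes \<phi> :: "nat \<Rightarrow> real" and M :: nat and lam Lam d :: real
  assumes M: "2 \<le> M" and lam: "0 < lam" and d: "0 < d" "d < 1/2"
    and sd: "\<And>j. Suc (Suc j) < M \<Longrightarrow>
       lam \<le> (\<phi> (Suc (Suc j)) - \<phi> (Suc j)) - (\<phi> (Suc j) - \<phi> j) \<and>
       (\<phi> (Suc (Suc j)) - \<phi> (Suc j)) - (\<phi> (Suc j) - \<phi> j) \<le> Lam"
  shows "norm (\<Sum>n<M. e (\<phi> n)) \<le> 1 + (Lam * (real M - 2) + 2) * (2*d/lam + 1 + 2/(pi*d))"
proof -
  define g where "g j = \<phi> (Suc j) - \<phi> j" for j
  define L where "L = M - 2"
  have hML: "M = Suc (Suc L)" using M by (simp add: L_def)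
  define J where "J = {..L}"
  define E where "E j = e (\<phi> j)" for j
  define K where "K = 2*d/lam + 1 + 2/(pi*d)"
  have sdg: "lam \<le> g (Suc j) - g j \<and> g (Suc j) - g j \<le> Lam" if "Suc j \<le> L" for j
    using sd[of j] that unfolding g_def hML by auto
  have gdiff: "lam * (real j - real i) \<le> g j - g i \<and> g j - g i \<le> Lam * (real j - real i)"
    if "i \<le> j" "j \<le> L" for i j
    using that
  proof (induction j rule: dec_induct)
    case base then show ?case by simp
  next
    case (step m)
    have "lam \<le> g (Suc m) - g m \<and> g (Suc m) - g m \<le> Lam" using sdg[of m] step by simp
    with step show ?case by (simp add: algebra_simps)
  qed
  have gmono: "g i \<le> g j" if "i \<le> j" "j \<le> L" for i j
    using gdiff[OF that] lam that by (smt (verit) mult_nonneg_nonneg of_nat_mono)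
  have gsmono: "g i < g j" if "i < j" "j \<le> L" for i j
  proof -
    have "0 < lam * (real j - real i)" using lam that by simp
    thus ?thesis using gdiff[of i j] that by linarith
  qed
  define \<kappa> where "\<kappa> j = \<lfloor>g j + d\<rfloor>" for j
  define T where "T = {\<kappa> 0..\<kappa> L}"
  have kT: "\<kappa> ` J \<subseteq> T" unfolding T_def J_def \<kappa>_def
    using gmono by (auto intro!: floor_mono)
  have sum1: "(\<Sum>n<M. E n) = E (Suc L) + (\<Sum>j\<in>J. E j)"
    unfolding hML J_def by (simp add: lessThan_Suc_atMost[symmetric])
  have sum2: "(\<Sum>j\<in>J. E j) = (\<Sum>k\<in>T. \<Sum>j\<in>{j. j \<in> J \<and> \<kappa> j = k}. E j)"
    by (rule sum.group[symmetric], simp add: J_def, simp add: T_def, rule kT)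
  have inner: "norm (\<Sum>j\<in>{j. j \<in> J \<and> \<kappa> j = k}. E j) \<le> K" for k
  proof -
    define Bk where "Bk = {j. j \<in> J \<and> \<kappa> j = k \<and> g j < k + d}"
    define Gk where "Gk = {j. j \<in> J \<and> \<kappa> j = k \<and> \<not> g j < k + d}"
    have fin: "finite {j. j \<in> J \<and> \<kappa> j = k}" by (simp add: J_def)
    have split: "(\<Sum>j\<in>{j. j \<in> J \<and> \<kappa> j = k}. E j) = (\<Sum>j\<in>Bk. E j) + (\<Sum>j\<in>Gk. E j)"
    proof -
      have "{j. j \<in> J \<and> \<kappa> j = k} = Bk \<union> Gk" "Bk \<inter> Gk = {}" by (auto simp: Bk_def Gk_def)
      moreover have "finite Bk" "finite Gk" by (auto simp: Bk_def Gk_def J_def)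
      ultimately show ?thesis by (simp add: sum.union_disjoint)
    qed
    have kd: "k \<le> g j + d \<and> g j + d < k + 1" if "\<kappa> j = k" for j
      using that unfolding \<kappa>_def by linarith
    have bad: "norm (\<Sum>j\<in>Bk. E j) \<le> 2*d/lam + 1"
    proof (cases "Bk = {}")
      case True then show ?thesis using d lam by simp
    next
      case False
      have finB: "finite Bk" by (auto simp: Bk_def J_def)
      define a where "a = Min Bk"
      define b where "b = Max Bk"
      have aB: "a \<in> Bk" and bB: "b \<in> Bk" using Min_in Max_in finB False by (auto simp: a_def b_def)
      have sub: "Bk \<subseteq> {a..b}" using finB by (auto simp: a_def b_def)
      have ab: "a \<le> b" using sub aB by auto
      have "g b - g a < 2 * d" using aB bB kd unfolding Bk_def by force
      moreover have "lam * (real b - real a) \<le> g b - g a" using gdiff[of a b] ab bB by (auto simp: Bk_def J_def)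
      ultimately have "lam * (real b - real a) < 2 * d" by linarith
      hence "real b - real a < 2 * d / lam" using lam by (simp add: field_simps)
      have "norm (\<Sum>j\<in>Bk. E j) \<le> (\<Sum>j\<in>Bk. norm (E j))" by (rule norm_sum)
      also have "\<dots> = real (card Bk)" by (simp add: E_def)
      also have "\<dots> \<le> real (card {a..b})" using card_mono[OF _ sub] by simp
      also have "\<dots> = real b - real a + 1" using ab by simp
      also have "\<dots> \<le> 2*d/lam + 1" using \<open>real b - real a < 2 * d / lam\<close> by simp
      finally show ?thesis .
    qed
    have good: "norm (\<Sum>j\<in>Gk. E j) \<le> 2/(pi*d)"
    proof (cases "Gk = {}")
      case True then show ?thesis using d by simp
    next
      case False
      have finG: "finite Gk" by (auto simp: Gk_def J_def)
      define a where "a = Min Gk"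
      define b where "b = Max Gk"
      have aG: "a \<in> Gk" and bG: "b \<in> Gk" using Min_in Max_in finG False by (auto simp: a_def b_def)
      have sub: "Gk \<subseteq> {a..b}" using finG by (auto simp: a_def b_def)
      have ab: "a \<le> b" using sub aG by auto
      have bL: "b \<le> L" using bG by (auto simp: Gk_def J_def)
      have rng: "k + d \<le> g j \<and> g j < k + 1 - d" if "a \<le> j" "j \<le> b" for j
      proof -
        have "g a \<le> g j" "g j \<le> g b" using gmono that bL by auto
        moreover have "k + d \<le> g a" using aG by (auto simp: Gk_def)
        moreover have "g b < k + 1 - d" using bG kd[of b] by (auto simp: Gk_def)
        ultimately show ?thesis by linarith
      qed
      have eq: "Gk = {a..<Suc b}"
      proof
        show "Gk \<subseteq> {a..<Suc b}" using sub by auto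
        show "{a..<Suc b} \<subseteq> Gk"
        proof
          fix j assume j: "j \<in> {a..<Suc b}"
          hence r: "k + d \<le> g j \<and> g j < k + 1 - d" using rng by auto
          have "\<kappa> j = k" unfolding \<kappa>_def using r d by (intro floor_unique) linarith+
          thus "j \<in> Gk" using j bL r d by (auto simp: Gk_def J_def)
        qed
      qed
      have "norm (\<Sum>j\<in>{a..<Suc b}. e (\<phi> j)) \<le> 2/(pi*d)"
      proof (rule KL[OF d, of a "Suc b" k])
        show "a < Suc b" using ab by simp
        show "k + d \<le> \<phi> (Suc j) - \<phi> j \<and> \<phi> (Suc j) - \<phi> j \<le> k + 1 - d" if "a \<le> j" "j < Suc b" for j
          using rng[of j] that unfolding g_def by auto
        show "\<phi> (Suc j) - \<phi> j \<le> \<phi> (Suc (Suc j)) - \<phi> (Suc j)" if "a \<le> j" "Suc j < Suc b" for j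
          using gmono[of j "Suc j"] that bL unfolding g_def by auto
      qed
      thus ?thesis using eq by (simp add: E_def)
    qed
    show ?thesis unfolding split K_def
      using norm_triangle_ineq[of "\<Sum>j\<in>Bk. E j" "\<Sum>j\<in>Gk. E j"] bad good by linarith
  qed
  have "norm (\<Sum>j\<in>J. E j) \<le> (\<Sum>k\<in>T. K)"
    unfolding sum2 by (rule sum_norm_le) (rule inner)
  also have "\<dots> = real (card T) * K" by simp
  also have "\<dots> \<le> (Lam * real L + 2) * K"
  proof (rule mult_right_mono)
    have k0L: "\<kappa> 0 \<le> \<kappa> L" unfolding \<kappa>_def using gmono[of 0 L] by (intro floor_mono) simp
    have "real (card T) = real_of_int (\<kappa> L - \<kappa> 0 + 1)" using k0L by (simp add: T_def)
    also have "\<dots> \<le> g L - g 0 + 2" unfolding \<kappa>_def by linarith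
    also have "\<dots> \<le> Lam * real L + 2" using gdiff[of 0 L] by simp
    finally show "real (card T) \<le> Lam * real L + 2" .
    show "0 \<le> K" using d lam by (simp add: K_def)
  qed
  finally have A: "norm (\<Sum>j\<in>J. E j) \<le> (Lam * real L + 2) * K" .
  have "norm (\<Sum>n<M. E n) \<le> norm (E (Suc L)) + norm (\<Sum>j\<in>J. E j)"
    unfolding sum1 by (rule norm_triangle_ineq)
  also have "\<dots> \<le> 1 + (Lam * real L + 2) * K" using A by (simp add: E_def)
  finally show ?thesis using M by (simp add: E_def K_def L_def of_nat_diff)
qed



lemma mvt_at:
  fixes F F' :: "real \<Rightarrow> real"
  assumes "a < b" "continuous_on {a..b} F"
    and "\<And>x. a < x \<Longrightarrow> x < b \<Longrightarrow> (F has_real_derivative F' x) (at x)"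
  shows "\<exists>z. a < z \<and> z < b \<and> F b - F a = (b - a) * F' z"
proof -
  obtain l z where z: "a < z" "z < b" "DERIV F z :> l" "F b - F a = (b - a) * l"
  proof -
    have "\<And>x. a < x \<Longrightarrow> x < b \<Longrightarrow> F differentiable (at x)"
      using assms(3) real_differentiable_def by blast
    from MVT[OF assms(1,2) this] show ?thesis using that by blast
  qed
  have "l = F' z" using DERIV_unique[OF z(3) assms(3)[OF z(1,2)]] .
  thus ?thesis using z by blast
qed

lemma interior_deriv:
  fixes F F' :: "real \<Rightarrow> real"
  assumes d: "\<And>x. x \<in> {X<..X+Y} \<Longrightarrow> (F has_real_derivative F' x) (at x within {X<..X+Y})"
    and x: "X < x" "x < X + Y"
  shows "(F has_real_derivative F' x) (at x)"
proof -
  have xi: "x \<in> {X<..X+Y}" using x by simp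
  have sub: "{X<..<X+Y} \<subseteq> {X<..X+Y}" by auto
  have "(F has_real_derivative F' x) (at x within {X<..<X+Y})"
    by (rule has_field_derivative_subset[OF d[OF xi] sub])
  moreover have "x \<in> {X<..<X+Y}" using x by simp
  hence "at x within {X<..<X+Y} = at x"
    by (intro at_within_open open_greaterThanLessThan)
  ultimately show ?thesis by simp
qed

lemma second_diff:
  fixes f f' f'' :: "real \<Rightarrow> real"
  assumes d1: "\<And>x. x \<in> {X<..X+Y} \<Longrightarrow> (f has_real_derivative f' x) (at x within {X<..X+Y})"
    and d2: "\<And>x. x \<in> {X<..X+Y} \<Longrightarrow> (f' has_real_derivative f'' x) (at x within {X<..X+Y})"
    and bnd: "\<And>x. x \<in> {X<..X+Y} \<Longrightarrow> lam \<le> f'' x \<and> f'' x \<le> Lam"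
    and a: "X < a" "a + 2 \<le> X + Y"
  shows "lam \<le> f (a+2) - 2 * f (a+1) + f a \<and> f (a+2) - 2 * f (a+1) + f a \<le> Lam"
proof -
  define I where "I = {X<..X+Y}"
  have cf: "continuous_on I f" unfolding I_def by (rule DERIV_continuous_on) (rule d1)
  have cf': "continuous_on I f'" unfolding I_def by (rule DERIV_continuous_on) (rule d2)
  define h where "h t = f (t + 1) - f t" for t
  have ch: "continuous_on {a..a+1} h"
  proof -
    have "continuous_on {a..a+1} (\<lambda>t. f (t + 1))"
    proof (rule continuous_on_compose2[OF cf])
      show "continuous_on {a..a+1} (\<lambda>t. t + 1)" by (intro continuous_intros)
      show "(\<lambda>t. t + 1) ` {a..a+1} \<subseteq> I" using a by (auto simp: I_def)
    qed
    moreover have "continuous_on {a..a+1} f" by (rule continuous_on_subset[OF cf]) (use a in \<open>auto simp: I_def\<close>)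
    ultimately show ?thesis unfolding h_def by (intro continuous_on_diff)
  qed
  have dh: "(h has_real_derivative (f' (t+1) - f' t)) (at t)" if "a < t" "t < a + 1" for t
  proof -
    have "(f has_real_derivative f' (t + 1)) (at (t + 1))"
      by (rule interior_deriv[OF d1]) (use that a in auto)
    hence "((\<lambda>x. f (x + 1)) has_real_derivative f' (t + 1)) (at t)" by (rule DERIV_shift[THEN iffD1])
    moreover have "(f has_real_derivative f' t) (at t)"
      by (rule interior_deriv[OF d1]) (use that a in auto)
    ultimately show ?thesis unfolding h_def by (intro DERIV_diff)
  qed
  have "\<exists>z. a < z \<and> z < a + 1 \<and> h (a+1) - h a = (a + 1 - a) * (f' (z+1) - f' z)"
    by (rule mvt_at[OF _ ch dh]) simp_all
  then obtain \<tau> where \<tau>: "a < \<tau>" "\<tau> < a + 1" "h (a+1) - h a = (a + 1 - a) * (f' (\<tau>+1) - f' \<tau>)"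
    by blast
  have cf'2: "continuous_on {\<tau>..\<tau>+1} f'" by (rule continuous_on_subset[OF cf']) (use a \<tau> in \<open>auto simp: I_def\<close>)
  obtain \<eta> where \<eta>: "\<tau> < \<eta>" "\<eta> < \<tau> + 1" "f' (\<tau>+1) - f' \<tau> = (\<tau> + 1 - \<tau>) * f'' \<eta>"
  proof -
    have "\<exists>z. \<tau> < z \<and> z < \<tau> + 1 \<and> f' (\<tau>+1) - f' \<tau> = (\<tau> + 1 - \<tau>) * f'' z"
    proof (rule mvt_at[OF _ cf'2])
      fix x assume "\<tau> < x" "x < \<tau> + 1"
      thus "(f' has_real_derivative f'' x) (at x)" using a \<tau> by (intro interior_deriv[OF d2]) auto
    qed simp
    thus ?thesis using that by blast
  qed
  have "\<eta> \<in> {X<..X+Y}" using \<eta>(1,2) \<tau>(1,2) a by simp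
  hence "lam \<le> f'' \<eta> \<and> f'' \<eta> \<le> Lam" by (rule bnd)
  moreover have "f (a+2) - 2 * f (a+1) + f a = f'' \<eta>"
  proof -
    have e2: "a + 1 + 1 = a + 2" by simp
    have "f (a+2) - 2 * f (a+1) + f a = h (a+1) - h a" unfolding h_def e2 by simp
    also have "\<dots> = f' (\<tau>+1) - f' \<tau>" using \<tau>(3) by simp
    also have "\<dots> = f'' \<eta>" using \<eta>(3) by simp
    finally show ?thesis .
  qed
  ultimately show ?thesis by simp
qed



lemma numeric:
  fixes r A s Lam m Y :: real
  assumes r: "1.772 \<le> r" and A: "2.79 \<le> A" and s: "0 < s" "s < 1/2" and L: "s * s \<le> Lam"
    and m: "0 \<le> m" "m \<le> Y - 1"
  shows "s + (Lam * m + 2) * (4 / r + s) \<le> A * (Lam * Y + 2)"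
proof -
  define c where "c = 4 / r + s"
  have r0: "0 < r" using r by simp
  have "4 / r \<le> 4 / 1.772" using r by (intro divide_left_mono) auto
  hence c1: "4 / r \<le> 2.2574" by simp
  hence cA: "c \<le> A" using s A by (simp add: c_def)
  have c0: "0 \<le> c" using r0 s by (simp add: c_def)
  have L0: "0 \<le> Lam" using L s by (smt (verit) mult_nonneg_nonneg)
  have "Lam * m * c \<le> Lam * (Y - 1) * A"
    using L0 m cA s c1 c0 by (intro mult_mono) (auto simp: c_def intro: mult_nonneg_nonneg mult_left_mono)
  moreover have "0 \<le> 2.79 * (s - 150/279)^2 + 0.003" by simp
  hence "3 * s - 2.79 * (s * s) \<le> 0.81" by (simp add: power2_eq_square algebra_simps)
  moreover have "2.79 * (s * s) \<le> A * Lam" using A L s by (intro mult_mono) auto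
  ultimately show ?thesis unfolding c_def[symmetric] using c1 A
    by (simp add: algebra_simps c_def)
qed

theorem lemma10:
  fixes X Y lam Lam :: real and f f' f'' :: "real \<Rightarrow> real"
  assumes "Y \<ge> 1"
    and "\<And>x. x \<in> {X<..X+Y} \<Longrightarrow> (f has_real_derivative f' x) (at x within {X<..X+Y})"
    and "\<And>x. x \<in> {X<..X+Y} \<Longrightarrow> (f' has_real_derivative f'' x) (at x within {X<..X+Y})"
    and "continuous_on {X<..X+Y} f''"
    and "0 < lam"
    and "\<And>x. x \<in> {X<..X+Y} \<Longrightarrow> lam \<le> f'' x \<and> f'' x \<le> Lam"
  shows "norm ((1 / Y) * (\<Sum>n\<in>{n::int. X < of_int n \<and> of_int n \<le> X + Y}. e (f (of_int n))))
           \<le> (2 / sqrt pi) * (1 + sqrt (1 + 3 * pi / 8))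
               * (sqrt (Lam^2 / lam) + 2 * (lam * Y^2) powr (-1/2))"
proof -
  define A where "A = (2 / sqrt pi) * (1 + sqrt (1 + 3 * pi / 8))"
  define s where "s = sqrt lam"
  have Y0: "0 < Y" using assms(1) by simp
  have s0: "0 < s" using assms(5) by (simp add: s_def)
  have ss: "s * s = lam" using assms(5) by (simp add: s_def)
  have LL: "lam \<le> Lam" using assms(6)[of "X+Y"] Y0 by auto
  have Lam0: "0 < Lam" using LL assms(5) by simp
  have r1: "1.772 \<le> sqrt pi"
    by (rule real_le_rsqrt) (use pi_approx in \<open>simp add: power2_eq_square\<close>)
  have r2: "sqrt pi \<le> 1.7725"
  proof -
    have "sqrt pi \<le> sqrt (1.7725^2)" using pi_approx by (intro real_sqrt_le_mono) (simp add: power2_eq_square)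
    thus ?thesis by simp
  qed
  have q1: "1.475 \<le> sqrt (1 + 3 * pi / 8)"
    by (rule real_le_rsqrt) (use pi_approx in \<open>simp add: power2_eq_square\<close>)
  have A279: "2.79 \<le> A"
  proof -
    have "2.79 * sqrt pi \<le> 2 * (1 + sqrt (1 + 3 * pi / 8))" using r2 q1 by simp
    thus ?thesis using r1 unfolding A_def by (simp add: field_simps)
  qed
  have A2: "2 \<le> A" using A279 by simp
  have rhs: "sqrt (Lam^2 / lam) + 2 * (lam * Y^2) powr (-1/2) = (Lam * Y + 2) / (s * Y)"
  proof -
    have "sqrt (Lam^2 / lam) = sqrt (Lam^2) / sqrt lam" by (rule real_sqrt_divide)
    also have "sqrt (Lam^2) = Lam" using Lam0 by simp
    finally have h1: "sqrt (Lam^2 / lam) = Lam / s" by (simp add: s_def)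
    have m: "(-1/2::real) = - (1/2)" by simp
    have "(lam * Y^2) powr (-1/2) = inverse ((lam * Y^2) powr (1/2))"
      unfolding m by (rule powr_minus)
    also have "(lam * Y^2) powr (1/2) = sqrt (lam * Y^2)"
      using assms(5) by (intro powr_half_sqrt) simp
    also have "sqrt (lam * Y^2) = s * Y" using Y0 by (simp add: s_def real_sqrt_mult)
    finally have h2: "(lam * Y^2) powr (-1/2) = 1 / (s * Y)" by (simp only: inverse_eq_divide)
    show ?thesis unfolding h1 h2 using s0 Y0 by (simp add: field_simps)
  qed
  define S where "S = (\<Sum>n\<in>{n::int. X < of_int n \<and> of_int n \<le> X + Y}. e (f (of_int n)))"
  define N1 where "N1 = \<lfloor>X\<rfloor> + 1"
  define N2 where "N2 = \<lfloor>X + Y\<rfloor>"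
  define M where "M = nat (N2 - N1 + 1)"
  have N12: "N1 - 1 \<le> N2" unfolding N1_def N2_def using Y0 by (simp add: floor_mono)
  have Mr: "real M = real_of_int (N2 - N1 + 1)" using N12 by (simp add: M_def)
  have MY: "real M \<le> Y + 1" "real M - 1 \<le> Y" unfolding Mr N1_def N2_def by linarith+
  have setEq: "{n::int. X < of_int n \<and> of_int n \<le> X + Y} = (\<lambda>j. N1 + int j) ` {..<M}"
  proof
    show "{n::int. X < of_int n \<and> of_int n \<le> X + Y} \<subseteq> (\<lambda>j. N1 + int j) ` {..<M}"
    proof
      fix n :: int assume "n \<in> {n::int. X < of_int n \<and> of_int n \<le> X + Y}"
      hence n: "X < of_int n" "of_int n \<le> X + Y" by auto
      have "\<lfloor>X\<rfloor> < n" using n(1) by (simp add: floor_less_iff)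
      hence "N1 \<le> n" unfolding N1_def by linarith
      moreover have "n \<le> N2" unfolding N2_def using n(2) by (simp add: le_floor_iff)
      ultimately show "n \<in> (\<lambda>j. N1 + int j) ` {..<M}"
        by (intro image_eqI[of _ _ "nat (n - N1)"]) (auto simp: M_def)
    qed
    show "(\<lambda>j. N1 + int j) ` {..<M} \<subseteq> {n::int. X < of_int n \<and> of_int n \<le> X + Y}"
    proof
      fix n assume "n \<in> (\<lambda>j. N1 + int j) ` {..<M}"
      then obtain j where j: "j < M" "n = N1 + int j" by auto
      have "N1 \<le> n" "n \<le> N2" using j by (auto simp: M_def)
      hence "\<lfloor>X\<rfloor> < n" "n \<le> \<lfloor>X + Y\<rfloor>" unfolding N1_def N2_def by linarith+
      hence "X < of_int n" "of_int n \<le> X + Y" 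
        by (simp_all add: floor_less_iff le_floor_iff)
      thus "n \<in> {n::int. X < of_int n \<and> of_int n \<le> X + Y}" by simp
    qed
  qed
  define \<phi> where "\<phi> j = f (of_int N1 + real j)" for j
  have Ssum: "S = (\<Sum>j<M. e (\<phi> j))"
  proof -
    have "inj_on (\<lambda>j. N1 + int j) {..<M}" by (auto simp: inj_on_def)
    hence "S = (\<Sum>j<M. e (f (of_int (N1 + int j))))" unfolding S_def setEq by (simp add: sum.reindex)
    thus ?thesis by (simp add: \<phi>_def)
  qed
  have normS_M: "norm S \<le> real M"
  proof -
    have "norm S \<le> (\<Sum>j<M. norm (e (\<phi> j)))" unfolding Ssum by (rule norm_sum)
    thus ?thesis by simp
  qed
  have main: "norm S \<le> A * (Lam * Y + 2) / s"
  proof (cases "s < 1/2")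
    case False
    have "Y + 1 \<le> A * (Lam * Y + 2) / s"
    proof (cases "s \<le> 2")
      case True
      have "Y + 1 \<le> A * (s * Y + 2 / s)"
      proof -
        have "2.79 * (1/2) \<le> A * s" using False A279 by (intro mult_mono) auto
        hence "1 * Y \<le> (A * s) * Y" using Y0 by (intro mult_right_mono) auto
        hence "Y \<le> A * (s * Y)" by (simp add: mult.assoc)
        moreover have "1 \<le> A * (2 / s)" using True s0 A279 by (simp add: field_simps)
        ultimately show ?thesis by (simp add: distrib_left)
      qed
      also have "\<dots> \<le> A * (Lam * Y + 2) / s"
      proof -
        have "s * s * Y \<le> Lam * Y" using LL ss Y0 by simp
        hence "(s * s * Y + 2) / s \<le> (Lam * Y + 2) / s" using s0 by (intro divide_right_mono) auto
        moreover have "s * Y + 2 / s = (s * s * Y + 2) / s" using s0 by (simp add: field_simps)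
        ultimately have "s * Y + 2 / s \<le> (Lam * Y + 2) / s" by simp
        hence "A * (s * Y + 2 / s) \<le> A * ((Lam * Y + 2) / s)" using A279
          by (intro mult_left_mono) auto
        thus ?thesis by simp
      qed
      finally show ?thesis .
    next
      case False
      have "Y + 1 \<le> A * (s * Y)"
      proof -
        have "2.79 * 2 \<le> A * s" using False A279 by (intro mult_mono) auto
        hence h0: "5 \<le> A * s" by simp
        have h: "5 * Y \<le> (A * s) * Y" by (rule mult_right_mono[OF h0]) (use Y0 in simp)
        have "(A * s) * Y = A * (s * Y)" by (simp add: mult.assoc)
        thus ?thesis using h assms(1) by linarith
      qed
      also have "\<dots> \<le> A * (Lam * Y + 2) / s"
      proof -
        have "s * s * Y \<le> Lam * Y" using LL ss Y0 by simp
        hence "s * Y \<le> (Lam * Y + 2) / s" using s0 by (simp add: field_simps)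
        hence "A * (s * Y) \<le> A * ((Lam * Y + 2) / s)" using A279 by (intro mult_left_mono) auto
        thus ?thesis by simp
      qed
      finally show ?thesis .
    qed
    thus ?thesis using normS_M MY by linarith
  next
    case True
    show ?thesis
    proof (cases "M \<le> 1")
      case True
      have "real M \<le> 1" using True by simp
      moreover have "1 \<le> A * (Lam * Y + 2) / s"
      proof -
        have "A * 2 \<le> A * (Lam * Y + 2)" using A279 Lam0 Y0 by (intro mult_left_mono) auto
        hence "s \<le> A * (Lam * Y + 2)" using \<open>s < 1/2\<close> A2 by linarith
        thus ?thesis using s0 by (simp add: field_simps)
      qed
      ultimately show ?thesis using normS_M by linarith
    next
      case False
      hence M2: "2 \<le> M" by simp
      define d where "d = s / sqrt pi"
      have d0: "0 < d" using s0 by (simp add: d_def)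
      have d12: "d < 1/2"
      proof -
        have "s / sqrt pi \<le> s / 1" using s0 r1 pi_gt3 by (intro divide_left_mono) auto
        thus ?thesis using \<open>s < 1/2\<close> unfolding d_def by linarith
      qed
      have sd: "lam \<le> (\<phi> (Suc (Suc j)) - \<phi> (Suc j)) - (\<phi> (Suc j) - \<phi> j) \<and>
           (\<phi> (Suc (Suc j)) - \<phi> (Suc j)) - (\<phi> (Suc j) - \<phi> j) \<le> Lam"
        if "Suc (Suc j) < M" for j
      proof -
        define a where "a = of_int N1 + real j"
        have aX: "X < a" unfolding a_def N1_def by linarith
        have "Suc (Suc j) + 1 \<le> M" using that by simp
        hence "real j + 3 \<le> real M" by linarith
        hence "of_int N1 + real j + 2 \<le> of_int N2" unfolding Mr by simp
        moreover have "real_of_int N2 \<le> X + Y" unfolding N2_def by simp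
        ultimately have "a + 2 \<le> X + Y" unfolding a_def by linarith
        from second_diff[OF assms(2,3,6) aX this]
        have "lam \<le> f (a+2) - 2 * f (a+1) + f a \<and> f (a+2) - 2 * f (a+1) + f a \<le> Lam" .
        moreover have "\<phi> (Suc (Suc j)) = f (a+2)" "\<phi> (Suc j) = f (a+1)" "\<phi> j = f a"
          unfolding \<phi>_def a_def by (simp_all add: algebra_simps)
        ultimately show ?thesis by simp
      qed
      have D: "norm S \<le> 1 + (Lam * (real M - 2) + 2) * (2*d/lam + 1 + 2/(pi*d))"
        unfolding Ssum by (rule discrete[of M lam d \<phi> Lam, OF M2 assms(5) d0 d12 sd])
      have K: "2*d/lam + 1 + 2/(pi*d) = (4 / sqrt pi + s) / s"
      proof -
        define r where "r = sqrt pi"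
        have r0: "0 < r" by (simp add: r_def)
        have pr: "pi = r * r" by (simp add: r_def)
        have "2 * d / lam + 1 + 2 / (pi * d) = 2 * (s / r) / (s * s) + 1 + 2 / ((r * r) * (s / r))"
          unfolding d_def ss[symmetric] r_def[symmetric] pr[symmetric] ..
        also have "\<dots> = (4 / r + s) / s" using r0 s0 by (simp add: field_simps)
        finally show ?thesis by (simp add: r_def)
      qed
      have "s + (Lam * (real M - 2) + 2) * (4 / sqrt pi + s) \<le> A * (Lam * Y + 2)"
        by (rule numeric[OF r1 A279 s0 \<open>s < 1/2\<close>]) (use LL ss M2 MY in auto)
      hence h: "(s + (Lam * (real M - 2) + 2) * (4 / sqrt pi + s)) / s \<le> A * (Lam * Y + 2) / s"
        using s0 by (intro divide_right_mono) auto
      have "(s + (Lam * (real M - 2) + 2) * (4 / sqrt pi + s)) / s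
          = 1 + (Lam * (real M - 2) + 2) * ((4 / sqrt pi + s) / s)"
        using s0 by (simp add: add_divide_distrib times_divide_eq_right[symmetric] del: times_divide_eq_right)
      hence "1 + (Lam * (real M - 2) + 2) * ((4 / sqrt pi + s) / s) \<le> A * (Lam * Y + 2) / s"
        using h by simp
      thus ?thesis using D K by simp
    qed
  qed
  have "norm ((1 / Y) * S) = norm S / Y" using Y0 by (simp add: norm_divide)
  also have "\<dots> \<le> A * (Lam * Y + 2) / s / Y" by (rule divide_right_mono[OF main]) (use Y0 in simp)
  also have "\<dots> = A * ((Lam * Y + 2) / (s * Y))" by (simp add: field_simps)
  finally show ?thesis unfolding S_def A_def rhs .
qed


end
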